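(* Let $\Omega\subset\mathbb{R}^n$ be a bounded open convex set with smooth boundary, let $\Lambda>0$, and let $u$ be a nonconstant continuous viscosity solution of $(N_\Lambda)$ normalized so that $\max_{\overline\Omega}u=\frac1\Lambda$. Then $$|x-x_0|\ge u(x)\qquad\text{for all } x\in\overline\Omega \text{ with } u(x)\ge0 \text{ and all } x_0\in\Omega \text{ with } u(x_0)\le0 .$$ Consequently $\sup_{x\in\overline{\Omega_+}}\operatorname{dist}(x,\{u=0\})\ge\frac1\Lambda$, where $\Omega_+=\{x\in\Omega:u(x)>0\}$.
   Context: $\nu$ denotes the outer unit normal to $\partial\Omega$, and $\Delta_\infty u=\sum_{i,j=1}^n u_{x_i}u_{x_ix_j}u_{x_j}$. For $\Lambda\ge 0$, problem $(N_\Lambda)$ is $$\min\{|\nabla u|-\Lambda|u|,-\Delta_\infty u\}=0 \text{ in }\{u>0\}\cap\Omega,\quad \max\{\Lambda|u|-|\nabla u|,-\Delta_\infty u\}=0 \text{ in }\{u<0\}\cap\Omega,\quad -\Delta_\infty u=0 \text{ in }\{u=0\}\cap\Omega,\quad \tfrac{\partial u}{\partial\nu}=0 \text{ on }\partial\Omega,$$ understood in the viscosity sense as follows. For $s\in\mathbb{R}$, $\xi\in\mathbb{R}^n$, $X$ a symmetric $n\times n$ matrix, let $F(s,\xi,X)=\min\{|\xi|-\Lambda|s|,-\langle X\xi,\xi\rangle\}$, $G(s,\xi,X)=\max\{\Lambda|s|-|\xi|,-\langle X\xi,\xi\rangle\}$, $H(X)=-\langle X\xi,\xi\rangle$ (evaluated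 at the same $\xi$). For a function $u$ and point $x_0$, let $E$ denote $F$ if $u(x_0)>0$, $G$ if $u(x_0)<0$, $H$ if $u(x_0)=0$. An upper semicontinuous $u$ on $\overline\Omega$ is a viscosity subsolution if: for every $x_0\in\Omega$ and $\phi\in C^2(\Omega)$ with $\phi(x_0)=u(x_0)$ and $u(x)<\phi(x)$ for $x\neq x_0$, one has $E(\phi(x_0),\nabla\phi(x_0),\nabla^2\phi(x_0))\le 0$; and for every $x_0\in\partial\Omega$ and $\phi\in C^2(\overline\Omega)$ with the same touching property, $\min\{E(\phi(x_0),\nabla\phi(x_0),\nabla^2\phi(x_0)),\frac{\partial\phi}{\partial\nu}(x_0)\}\le 0$. A lower semicontinuous $u$ is a viscosity supersolution if the same holds with $u(x)>\phi(x)$ for $x\ne x_0$, with "$E\le 0$" replaced by "$E\ge 0$" at interior points and with $\max\{E(\phi(x_0),\nabla\phi(x_0),\nabla^2\phi(x_0)),\frac{\partial\phi}{\partial\nu}(x_0)\}\ge 0$ at boundary points. A continuous $u$ is a viscosity solution if it is both a sub- and a supersolution. *)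

theory Defs
  imports "HOL-Analysis.Analysis"
begin

text \<open>C-infinity functions on an open set S (all partial derivatives of all orders exist).\<close>
coinductive smooth_fun :: "'a::euclidean_space set \<Rightarrow> ('a \<Rightarrow> real) \<Rightarrow> bool" where
  "(\<forall>x\<in>S. (f has_derivative D x) (at x)) \<Longrightarrow> (\<forall>v. smooth_fun S (\<lambda>x. D x v))
   \<Longrightarrow> smooth_fun S f"

text \<open>Bounded open set with smooth boundary, and nu is its outer unit normal:
  locally near each boundary point p, Omega = {rho < 0} for a smooth rho with nonvanishing
  gradient, and nu p = grad rho p / |grad rho p|.\<close>
definition smooth_boundary_normal :: "'a::euclidean_space set \<Rightarrow> ('a \<Rightarrow> 'a) \<Rightarrow> bool" where
  "smooth_boundary_normal \<Omega> \<nu> \<longleftrightarrow>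
     (\<forall>p\<in>frontier \<Omega>. \<exists>r>0. \<exists>\<rho> grad.
        smooth_fun (ball p r) \<rho> \<and>
        (\<forall>x\<in>ball p r. (\<rho> has_derivative (\<lambda>h. grad x \<bullet> h)) (at x) \<and> grad x \<noteq> 0) \<and>
        \<Omega> \<inter> ball p r = {x\<in>ball p r. \<rho> x < 0} \<and>
        \<nu> p = (1 / norm (grad p)) *\<^sub>R grad p)"

definition C2_on :: "'a::euclidean_space set \<Rightarrow> ('a \<Rightarrow> real) \<Rightarrow> ('a \<Rightarrow> 'a) \<Rightarrow> ('a \<Rightarrow> 'a \<Rightarrow> 'a) \<Rightarrow> bool" where
  "C2_on S \<phi> g H \<longleftrightarrow> open S \<and>
     (\<forall>x\<in>S. (\<phi> has_derivative (\<lambda>h. g x \<bullet> h)) (at x) \<and> (g has_derivative H x) (at x)) \<and>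
     (\<forall>v. continuous_on S (\<lambda>x. H x v))"

definition usc_on :: "'a::metric_space set \<Rightarrow> ('a \<Rightarrow> real) \<Rightarrow> bool" where
  "usc_on S u \<longleftrightarrow> (\<forall>x\<in>S. \<forall>e>0. \<exists>d>0. \<forall>y\<in>S. dist y x < d \<longrightarrow> u y < u x + e)"

definition lsc_on :: "'a::metric_space set \<Rightarrow> ('a \<Rightarrow> real) \<Rightarrow> bool" where
  "lsc_on S u \<longleftrightarrow> (\<forall>x\<in>S. \<forall>e>0. \<exists>d>0. \<forall>y\<in>S. dist y x < d \<longrightarrow> u y > u x - e)"

text \<open>The operator E(s, xi, X) of (N_Lambda), selected by the sign of u(x0);
  q = <X xi, xi>, with xi the gradient and X the Hessian of the test function.\<close>
definition E_op :: "real \<Rightarrow> real \<Rightarrow> real \<Rightarrow> 'a::euclidean_space \<Rightarrow> ('a \<Rightarrow> 'a) \<Rightarrow> real" where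
  "E_op \<Lambda> ux0 s \<xi> X =
     (if ux0 > 0 then min (norm \<xi> - \<Lambda> * \<bar>s\<bar>) (- (X \<xi> \<bullet> \<xi>))
      else if ux0 < 0 then max (\<Lambda> * \<bar>s\<bar> - norm \<xi>) (- (X \<xi> \<bullet> \<xi>))
      else - (X \<xi> \<bullet> \<xi>))"

definition visc_sub :: "real \<Rightarrow> 'a::euclidean_space set \<Rightarrow> ('a \<Rightarrow> 'a) \<Rightarrow> ('a \<Rightarrow> real) \<Rightarrow> bool" where
  "visc_sub \<Lambda> \<Omega> \<nu> u \<longleftrightarrow>
     usc_on (closure \<Omega>) u \<and>
     (\<forall>x0\<in>\<Omega>. \<forall>\<phi> g H. C2_on \<Omega> \<phi> g H \<and> \<phi> x0 = u x0 \<and> (\<forall>x\<in>\<Omega>-{x0}. u x < \<phi> x)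
        \<longrightarrow> E_op \<Lambda> (u x0) (\<phi> x0) (g x0) (H x0) \<le> 0) \<and>
     (\<forall>x0\<in>frontier \<Omega>. \<forall>\<phi> g H U. closure \<Omega> \<subseteq> U \<and> C2_on U \<phi> g H \<and> \<phi> x0 = u x0 \<and>
        (\<forall>x\<in>closure \<Omega>-{x0}. u x < \<phi> x)
        \<longrightarrow> min (E_op \<Lambda> (u x0) (\<phi> x0) (g x0) (H x0)) (g x0 \<bullet> \<nu> x0) \<le> 0)"

definition visc_super :: "real \<Rightarrow> 'a::euclidean_space set \<Rightarrow> ('a \<Rightarrow> 'a) \<Rightarrow> ('a \<Rightarrow> real) \<Rightarrow> bool" where
  "visc_super \<Lambda> \<Omega> \<nu> u \<longleftrightarrow>
     lsc_on (closure \<Omega>) u \<and>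
     (\<forall>x0\<in>\<Omega>. \<forall>\<phi> g H. C2_on \<Omega> \<phi> g H \<and> \<phi> x0 = u x0 \<and> (\<forall>x\<in>\<Omega>-{x0}. u x > \<phi> x)
        \<longrightarrow> E_op \<Lambda> (u x0) (\<phi> x0) (g x0) (H x0) \<ge> 0) \<and>
     (\<forall>x0\<in>frontier \<Omega>. \<forall>\<phi> g H U. closure \<Omega> \<subseteq> U \<and> C2_on U \<phi> g H \<and> \<phi> x0 = u x0 \<and>
        (\<forall>x\<in>closure \<Omega>-{x0}. u x > \<phi> x)
        \<longrightarrow> max (E_op \<Lambda> (u x0) (\<phi> x0) (g x0) (H x0)) (g x0 \<bullet> \<nu> x0) \<ge> 0)"

definition visc_solution :: "real \<Rightarrow> 'a::euclidean_space set \<Rightarrow> ('a \<Rightarrow> 'a) \<Rightarrow> ('a \<Rightarrow> real) \<Rightarrow> bool" where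
  "visc_solution \<Lambda> \<Omega> \<nu> u \<longleftrightarrow>
     continuous_on (closure \<Omega>) u \<and> visc_sub \<Lambda> \<Omega> \<nu> u \<and> visc_super \<Lambda> \<Omega> \<nu> u"

end

theory Submission
  imports Defs
begin

lemma radial_C2:
  fixes c :: "'a::euclidean_space"
  assumes T: "open T" and S: "open S"
    and d1: "\<And>t. t \<in> T \<Longrightarrow> (F has_real_derivative F1 t) (at t)"
    and d2: "\<And>t. t \<in> T \<Longrightarrow> (F1 has_real_derivative F2 t) (at t)"
    and c2: "continuous_on T F2"
    and ST: "\<And>x. x \<in> S \<Longrightarrow> (x - c) \<bullet> (x - c) \<in> T"
  shows "C2_on S (\<lambda>x. F ((x - c) \<bullet> (x - c)))
     (\<lambda>x. (2 * F1 ((x - c) \<bullet> (x - c))) *\<^sub>R (x - c))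
     (\<lambda>x h. (2 * F1 ((x - c) \<bullet> (x - c))) *\<^sub>R h + (4 * F2 ((x - c) \<bullet> (x - c)) * ((x - c) \<bullet> h)) *\<^sub>R (x - c))"
proof -
  let ?s = "\<lambda>x. (x - c) \<bullet> (x - c)"
  have ds: "(?s has_derivative (\<lambda>h. 2 * ((x - c) \<bullet> h))) (at x)" for x
    by (auto intro!: derivative_eq_intros simp: inner_commute)
  have A: "((\<lambda>x. F (?s x)) has_derivative (\<lambda>h. (2 * F1 (?s x)) *\<^sub>R (x - c) \<bullet> h)) (at x)" if "x \<in> S" for x
  proof -
    have "((\<lambda>x. F (?s x)) has_derivative (\<lambda>h. F1 (?s x) * (2 * ((x - c) \<bullet> h)))) (at x)"
      using has_derivative_compose[OF ds d1[OF ST[OF that], unfolded has_field_derivative_def]]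
      by (simp add: o_def mult.commute)
    then show ?thesis by (simp add: algebra_simps)
  qed
  have B: "((\<lambda>x. (2 * F1 (?s x)) *\<^sub>R (x - c)) has_derivative
      (\<lambda>h. (2 * F1 (?s x)) *\<^sub>R h + (4 * F2 (?s x) * ((x - c) \<bullet> h)) *\<^sub>R (x - c))) (at x)" if "x \<in> S" for x
  proof -
    have f1: "((\<lambda>x. F1 (?s x)) has_derivative (\<lambda>h. F2 (?s x) * (2 * ((x - c) \<bullet> h)))) (at x)"
      using has_derivative_compose[OF ds d2[OF ST[OF that], unfolded has_field_derivative_def]]
      by (simp add: o_def mult.commute)
    have "((\<lambda>x. (2 * F1 (?s x)) *\<^sub>R (x - c)) has_derivative
      (\<lambda>h. (2 * F1 (?s x)) *\<^sub>R h + (2 * (F2 (?s x) * (2 * ((x - c) \<bullet> h)))) *\<^sub>R (x - c))) (at x)"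
      by (rule derivative_eq_intros f1 | simp)+
    then show ?thesis by (simp add: algebra_simps)
  qed
  have C: "continuous_on S (\<lambda>x. (2 * F1 (?s x)) *\<^sub>R v + (4 * F2 (?s x) * ((x - c) \<bullet> v)) *\<^sub>R (x - c))" for v
  proof -
    have cs: "continuous_on S ?s" by (intro continuous_intros)
    have c1: "continuous_on S (\<lambda>x. F1 (?s x))"
    proof (rule continuous_on_compose2[OF _ cs])
      show "continuous_on T F1" using d2 by (meson DERIV_continuous continuous_at_imp_continuous_on)
    qed (use ST in auto)
    have c2': "continuous_on S (\<lambda>x. F2 (?s x))"
      by (rule continuous_on_compose2[OF c2 cs]) (use ST in auto)
    show ?thesis by (intro continuous_intros c1 c2')
  qed
  show ?thesis unfolding C2_on_def using S A B C by blast
qed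

lemma C2_add:
  assumes "C2_on S f g H" "C2_on S f' g' H'"
  shows "C2_on S (\<lambda>x. f x + f' x) (\<lambda>x. g x + g' x) (\<lambda>x h. H x h + H' x h)"
  using assms unfolding C2_on_def
  by (auto intro!: derivative_eq_intros continuous_intros simp: inner_add_left)

lemma C2_const:
  assumes "C2_on S f g H"
  shows "C2_on S (\<lambda>x. f x + k) g H"
  using assms unfolding C2_on_def
  by (auto intro!: derivative_eq_intros)

lemma C2_mono:
  assumes "C2_on S f g H" "open T" "T \<subseteq> S"
  shows "C2_on T f g H"
  using assms unfolding C2_on_def by (auto intro: continuous_on_subset)

lemma quartic_C2:
  fixes p :: "'a::euclidean_space"
  shows "C2_on UNIV (\<lambda>x. ((x - p) \<bullet> (x - p))^2)
     (\<lambda>x. (2 * (2 * ((x - p) \<bullet> (x - p)))) *\<^sub>R (x - p))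
     (\<lambda>x h. (2 * (2 * ((x - p) \<bullet> (x - p)))) *\<^sub>R h + (4 * 2 * ((x - p) \<bullet> h)) *\<^sub>R (x - p))"
  by (rule radial_C2[where ?T=UNIV and ?F="\<lambda>t. t^2" and ?F1.0="\<lambda>t. 2*t" and ?F2.0="\<lambda>t. 2"])
     (auto intro!: derivative_eq_intros)

lemma nquartic_C2:
  fixes p :: "'a::euclidean_space"
  shows "C2_on UNIV (\<lambda>x. -(((x - p) \<bullet> (x - p))^2))
     (\<lambda>x. (2 * (-2 * ((x - p) \<bullet> (x - p)))) *\<^sub>R (x - p))
     (\<lambda>x h. (2 * (-2 * ((x - p) \<bullet> (x - p)))) *\<^sub>R h + (4 * (-2) * ((x - p) \<bullet> h)) *\<^sub>R (x - p))"
  by (rule radial_C2[where ?T=UNIV and ?F="\<lambda>t. -(t^2)" and ?F1.0="\<lambda>t. -2*t" and ?F2.0="\<lambda>t. -2"])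
     (auto intro!: derivative_eq_intros)

lemma test_fun:
  fixes p :: "'a::euclidean_space"
  assumes "C2_on UNIV \<phi> g H"
  shows "\<exists>\<psi> g' H'. C2_on UNIV \<psi> g' H' \<and> \<psi> p = \<phi> p + k \<and> g' p = g p \<and> H' p = H p \<and>
     (\<forall>x. x \<noteq> p \<longrightarrow> \<psi> x > \<phi> x + k)"
proof (intro exI conjI)
  show "C2_on UNIV (\<lambda>x. (\<phi> x + k) + ((x - p) \<bullet> (x - p))^2)
     (\<lambda>x. g x + (2 * (2 * ((x - p) \<bullet> (x - p)))) *\<^sub>R (x - p))
     (\<lambda>x h. H x h + ((2 * (2 * ((x - p) \<bullet> (x - p)))) *\<^sub>R h + (4 * 2 * ((x - p) \<bullet> h)) *\<^sub>R (x - p)))"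
    by (rule C2_add[OF C2_const[OF assms] quartic_C2])
  show "\<forall>x. x \<noteq> p \<longrightarrow> \<phi> x + k < \<phi> x + k + ((x - p) \<bullet> (x - p))\<^sup>2"
    by auto
qed auto

lemma test_fun2:
  fixes p :: "'a::euclidean_space"
  assumes "C2_on UNIV \<phi> g H"
  shows "\<exists>\<psi> g' H'. C2_on UNIV \<psi> g' H' \<and> \<psi> p = \<phi> p + k \<and> g' p = g p \<and> H' p = H p \<and>
     (\<forall>x. x \<noteq> p \<longrightarrow> \<psi> x < \<phi> x + k)"
proof (intro exI conjI)
  show "C2_on UNIV (\<lambda>x. (\<phi> x + k) + -(((x - p) \<bullet> (x - p))^2))
     (\<lambda>x. g x + (2 * (-2 * ((x - p) \<bullet> (x - p)))) *\<^sub>R (x - p))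
     (\<lambda>x h. H x h + ((2 * (-2 * ((x - p) \<bullet> (x - p)))) *\<^sub>R h + (4 * (-2) * ((x - p) \<bullet> h)) *\<^sub>R (x - p)))"
    by (rule C2_add[OF C2_const[OF assms] nquartic_C2])
  show "\<forall>x. x \<noteq> p \<longrightarrow> \<phi> x + k + -(((x - p) \<bullet> (x - p))\<^sup>2) < \<phi> x + k"
    by auto
qed auto

lemma sub_test:
  assumes sub: "visc_sub \<Lambda> \<Omega> \<nu> u" and "open \<Omega>" and C: "C2_on UNIV \<phi> g H"
    and p: "p \<in> closure \<Omega>" and mx: "\<forall>x\<in>closure \<Omega>. u x - \<phi> x \<le> u p - \<phi> p"
  shows "(p \<in> \<Omega> \<longrightarrow> E_op \<Lambda> (u p) (u p) (g p) (H p) \<le> 0) \<and>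
    (p \<in> frontier \<Omega> \<longrightarrow> min (E_op \<Lambda> (u p) (u p) (g p) (H p)) (g p \<bullet> \<nu> p) \<le> 0)"
proof -
  obtain \<psi> g' H' where C': "C2_on UNIV \<psi> g' H'" and e: "\<psi> p = \<phi> p + (u p - \<phi> p)"
    and gg: "g' p = g p" and HH: "H' p = H p" and gt: "\<forall>x. x \<noteq> p \<longrightarrow> \<psi> x > \<phi> x + (u p - \<phi> p)"
    using test_fun[OF C, of p "u p - \<phi> p"] by blast
  have e2: "\<psi> p = u p" using e by simp
  have lt: "u x < \<psi> x" if "x \<in> closure \<Omega>" "x \<noteq> p" for x
    using mx that gt by force
  have i: "E_op \<Lambda> (u p) (u p) (g p) (H p) \<le> 0" if "p \<in> \<Omega>"
  proof -
    have "C2_on \<Omega> \<psi> g' H'" using C2_mono[OF C' \<open>open \<Omega>\<close>] by simp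
    moreover have "\<forall>x\<in>\<Omega>-{p}. u x < \<psi> x" using lt closure_subset by blast
    ultimately show ?thesis using sub that e2 gg HH unfolding visc_sub_def by metis
  qed
  have b: "min (E_op \<Lambda> (u p) (u p) (g p) (H p)) (g p \<bullet> \<nu> p) \<le> 0" if "p \<in> frontier \<Omega>"
  proof -
    have "\<forall>x\<in>closure \<Omega>-{p}. u x < \<psi> x" using lt by blast
    then show ?thesis using sub that e2 gg HH C' unfolding visc_sub_def
      by (metis subset_UNIV)
  qed
  show ?thesis using i b by blast
qed

lemma super_test:
  assumes sup: "visc_super \<Lambda> \<Omega> \<nu> u" and "open \<Omega>" and C: "C2_on UNIV \<phi> g H"
    and p: "p \<in> closure \<Omega>" and mn: "\<forall>x\<in>closure \<Omega>. u x - \<phi> x \<ge> u p - \<phi> p"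
  shows "(p \<in> \<Omega> \<longrightarrow> E_op \<Lambda> (u p) (u p) (g p) (H p) \<ge> 0) \<and>
    (p \<in> frontier \<Omega> \<longrightarrow> max (E_op \<Lambda> (u p) (u p) (g p) (H p)) (g p \<bullet> \<nu> p) \<ge> 0)"
proof -
  obtain \<psi> g' H' where C': "C2_on UNIV \<psi> g' H'" and e: "\<psi> p = \<phi> p + (u p - \<phi> p)"
    and gg: "g' p = g p" and HH: "H' p = H p" and gt: "\<forall>x. x \<noteq> p \<longrightarrow> \<psi> x < \<phi> x + (u p - \<phi> p)"
    using test_fun2[OF C, of p "u p - \<phi> p"] by blast
  have e2: "\<psi> p = u p" using e by simp
  have lt: "u x > \<psi> x" if "x \<in> closure \<Omega>" "x \<noteq> p" for x
    using mn that gt by force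
  have i: "E_op \<Lambda> (u p) (u p) (g p) (H p) \<ge> 0" if "p \<in> \<Omega>"
  proof -
    have "C2_on \<Omega> \<psi> g' H'" using C2_mono[OF C' \<open>open \<Omega>\<close>] by simp
    moreover have "\<forall>x\<in>\<Omega>-{p}. u x > \<psi> x" using lt closure_subset by blast
    ultimately show ?thesis using sup that e2 gg HH unfolding visc_super_def by metis
  qed
  have b: "max (E_op \<Lambda> (u p) (u p) (g p) (H p)) (g p \<bullet> \<nu> p) \<ge> 0" if "p \<in> frontier \<Omega>"
  proof -
    have "\<forall>x\<in>closure \<Omega>-{p}. u x > \<psi> x" using lt by blast
    then show ?thesis using sup that e2 gg HH C' unfolding visc_super_def
      by (metis subset_UNIV)
  qed
  show ?thesis using i b by blast
qed

lemma normal_pos: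
  fixes \<Omega> :: "'a::euclidean_space set"
  assumes "open \<Omega>" "convex \<Omega>" "smooth_boundary_normal \<Omega> \<nu>" and p: "p \<in> frontier \<Omega>" and z: "z \<in> \<Omega>"
  shows "(p - z) \<bullet> \<nu> p > 0"
proof -
  obtain r \<rho> grad where r: "r > 0"
    and der: "\<forall>x\<in>ball p r. (\<rho> has_derivative (\<lambda>h. grad x \<bullet> h)) (at x) \<and> grad x \<noteq> 0"
    and eq: "\<Omega> \<inter> ball p r = {x\<in>ball p r. \<rho> x < 0}"
    and nu: "\<nu> p = (1 / norm (grad p)) *\<^sub>R grad p"
    using assms(3) p unfolding smooth_boundary_normal_def by blast
  have pO: "p \<notin> \<Omega>" using p \<open>open \<Omega>\<close> frontier_disjoint_eq by blast
  have pc: "p \<in> closure \<Omega>" using p by (simp add: frontier_def)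
  have rp: "\<rho> p \<ge> 0" proof (rule ccontr)
    assume "\<not> \<rho> p \<ge> 0"
    then have "p \<in> {x\<in>ball p r. \<rho> x < 0}" using r by auto
    then show False using eq pO by blast
  qed
  have dp: "(\<rho> has_derivative (\<lambda>h. grad p \<bullet> h)) (at p)" and gp: "grad p \<noteq> 0"
    using der r by auto
  obtain e where e: "e > 0" "ball z e \<subseteq> \<Omega>" using z \<open>open \<Omega>\<close> open_contains_ball by blast
  have key: "grad p \<bullet> ((z + w) - p) \<le> 0" if w: "norm w < e" for w
  proof (rule ccontr)
    define y where "y = z + w"
    define d where "d = y - p"
    assume "\<not> grad p \<bullet> ((z + w) - p) \<le> 0"
    then have pos: "grad p \<bullet> d > 0" by (simp add: d_def y_def)
    have yO: "y \<in> \<Omega>" using e w by (auto simp: y_def dist_norm)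
    have seg: "open_segment y p \<subseteq> \<Omega>"
      using in_interior_closure_convex_segment[OF \<open>convex \<Omega>\<close> _ pc] yO interior_open[OF \<open>open \<Omega>\<close>] by auto
    have D: "((\<lambda>t. \<rho> (p + t *\<^sub>R d)) has_real_derivative (grad p \<bullet> d)) (at 0)"
    proof -
      have lin: "((\<lambda>t. p + t *\<^sub>R d) has_derivative (\<lambda>t. t *\<^sub>R d)) (at 0)"
        by (auto intro!: derivative_eq_intros)
      have dp': "(\<rho> has_derivative (\<lambda>h. grad p \<bullet> h)) (at (p + 0 *\<^sub>R d))" using dp by simp
      have "((\<lambda>t. \<rho> (p + t *\<^sub>R d)) has_derivative (\<lambda>t. grad p \<bullet> (t *\<^sub>R d))) (at 0)"
        using has_derivative_compose[OF lin dp'] by (simp add: o_def)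
      moreover have "(\<lambda>t. grad p \<bullet> (t *\<^sub>R d)) = (*) (grad p \<bullet> d)" by (rule ext) simp
      ultimately show ?thesis unfolding has_field_derivative_def by simp
    qed
    obtain \<delta> where \<delta>: "\<delta> > 0" "\<forall>h>0. h < \<delta> \<longrightarrow> \<rho> (p + 0 *\<^sub>R d) < \<rho> (p + (0 + h) *\<^sub>R d)"
      using DERIV_pos_inc_right[OF D pos] by blast
    define h where "h = min (\<delta>/2) (min (1/2) (r / (2 * (norm d + 1))))"
    have "r / (2 * (norm d + 1)) > 0" using r norm_ge_zero[of d] by (intro divide_pos_pos) (simp, smt (verit))
    then have h0: "h > 0" "h < \<delta>" "h < 1" using \<delta> r by (auto simp: h_def)
    have "h * norm d < r"
    proof -
      have "h * norm d \<le> (r / (2 * (norm d + 1))) * norm d" by (rule mult_right_mono) (auto simp: h_def)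
      also have "\<dots> < r"
      proof -
        have n0: "norm d \<ge> 0" by simp
        have c0: "2 * (norm d + 1) > 0" using n0 by (smt (verit))
        have rn: "r * norm d \<ge> 0" using r n0 by simp
        have "r * norm d < r * norm d + r * norm d + 2 * r" using rn r by linarith
        then have "r * norm d < r * (2 * (norm d + 1))" by (simp add: algebra_simps)
        then show ?thesis using c0 by (simp add: pos_divide_less_eq)
      qed
      finally show ?thesis .
    qed
    then have inb: "p + h *\<^sub>R d \<in> ball p r" using h0 by (simp add: dist_norm)
    have "y \<noteq> p" using yO pO by auto
    then have "p + h *\<^sub>R d \<in> open_segment y p"
    proof -
      have "p + h *\<^sub>R d = (1 - (1 - h)) *\<^sub>R y + (1 - h) *\<^sub>R p"
        by (simp add: d_def scaleR_diff_left scaleR_diff_right)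
      then show ?thesis unfolding in_segment(2) using h0 \<open>y \<noteq> p\<close>
        by (intro conjI exI[of _ "1 - h"]) auto
    qed
    then have "p + h *\<^sub>R d \<in> \<Omega>" using seg by auto
    then have "p + h *\<^sub>R d \<in> {x\<in>ball p r. \<rho> x < 0}" using eq inb by blast
    then have "\<rho> (p + h *\<^sub>R d) < 0" by simp
    moreover have "\<rho> p < \<rho> (p + h *\<^sub>R d)" using \<delta>(2) h0 by simp
    ultimately show False using rp by linarith
  qed
  define w where "w = (e / 2 / norm (grad p)) *\<^sub>R grad p"
  have nw: "norm w = e/2" using gp e by (simp add: w_def)
  have "grad p \<bullet> ((z + w) - p) \<le> 0" using key nw e by simp
  moreover have "grad p \<bullet> w = e/2 * norm (grad p)"
  proof -
    have "grad p \<bullet> w = (e / 2 / norm (grad p)) * (grad p \<bullet> grad p)" by (simp add: w_def)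
    also have "grad p \<bullet> grad p = norm (grad p) * norm (grad p)" by (simp add: norm_eq_sqrt_inner)
    finally show ?thesis using gp by simp
  qed
  ultimately have "grad p \<bullet> (p - z) \<ge> e/2 * norm (grad p)"
    by (simp add: inner_diff_right inner_add_right)
  moreover have "e/2 * norm (grad p) > 0" using e gp by simp
  ultimately show ?thesis using gp by (simp add: nu inner_commute)
qed

lemma radial_hess:
  fixes y :: "'a::euclidean_space"
  shows "(a *\<^sub>R (a *\<^sub>R y) + (4 * b * (y \<bullet> (a *\<^sub>R y))) *\<^sub>R y) \<bullet> (a *\<^sub>R y)
     = a^2 * (y \<bullet> y) * (a + 4 * b * (y \<bullet> y))"
  by (simp add: algebra_simps power2_eq_square inner_commute)

lemma pos_impossible:
  fixes \<Omega> :: "'a::euclidean_space set"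
  assumes op: "open \<Omega>" and cv: "convex \<Omega>" and sb: "smooth_boundary_normal \<Omega> \<nu>" and L: "\<Lambda> > 0"
    and sup: "visc_super \<Lambda> \<Omega> \<nu> u" and cu: "continuous_on (closure \<Omega>) u"
    and bd: "bounded \<Omega>" and ne: "\<Omega> \<noteq> {}"
    and pos: "\<forall>x\<in>\<Omega>. u x > 0" and nn: "\<forall>x\<in>closure \<Omega>. u x \<ge> 0"
  shows False
proof -
  obtain c where c: "c \<in> \<Omega>" using ne by blast
  obtain e where e: "e > 0" "cball c e \<subseteq> \<Omega>" using op c open_contains_cball by blast
  have cbc: "cball c e \<subseteq> closure \<Omega>" using e closure_subset by blast
  obtain xm where xm: "xm \<in> cball c e" "\<forall>y\<in>cball c e. u xm \<le> u y"
    using continuous_attains_inf[of "cball c e" u] continuous_on_subset[OF cu cbc] e by force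
  define \<mu> where "\<mu> = u xm"
  have mu: "\<mu> > 0" using pos xm e by (auto simp: \<mu>_def)
  define k where "k = 1 / (2 * e^2)"
  have k: "k > 0" using e by (simp add: k_def)
  define \<epsilon> where "\<epsilon> = \<Lambda> * \<mu> / (4 * k * e)"
  have ep: "\<epsilon> > 0" using L mu k e by (simp add: \<epsilon>_def)
  define F1 where "F1 = (\<lambda>t::real. - \<epsilon> * k * exp (- k * t))"
  define F2 where "F2 = (\<lambda>t::real. \<epsilon> * k^2 * exp (- k * t))"
  let ?s = "\<lambda>x. (x - c) \<bullet> (x - c)"
  have C: "C2_on UNIV (\<lambda>x. \<epsilon> * exp (- k * ?s x))
     (\<lambda>x. (2 * F1 (?s x)) *\<^sub>R (x - c))
     (\<lambda>x h. (2 * F1 (?s x)) *\<^sub>R h + (4 * F2 (?s x) * ((x - c) \<bullet> h)) *\<^sub>R (x - c))"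
    by (rule radial_C2[where ?T=UNIV and ?F="\<lambda>t. \<epsilon> * exp (- k * t)"])
      (auto intro!: derivative_eq_intros continuous_intros simp: F1_def F2_def power2_eq_square)
  let ?\<phi> = "\<lambda>x. \<epsilon> * exp (- k * ?s x)"
  have cc: "compact (closure \<Omega>)" using bd by (simp add: compact_closure)
  have cne: "closure \<Omega> \<noteq> {}" using ne by simp
  have cf: "continuous_on (closure \<Omega>) (\<lambda>x. u x - ?\<phi> x)"
    by (intro continuous_intros cu)
  obtain p where p: "p \<in> closure \<Omega>" "\<forall>x\<in>closure \<Omega>. u p - ?\<phi> p \<le> u x - ?\<phi> x"
    using continuous_attains_inf[OF cc cne cf] by blast
  note T = super_test[OF sup op C p(1)] p(2)
  define y where "y = p - c"
  define s where "s = y \<bullet> y"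
  define a where "a = 2 * F1 s"
  have g: "(2 * F1 (?s p)) *\<^sub>R (p - c) = a *\<^sub>R y" by (simp add: a_def s_def y_def)
  have ex: "exp (- k * s) > 0" by simp
  have a0: "a < 0" using ep k ex by (simp add: a_def F1_def)
  have Hgg: "((2 * F1 (?s p)) *\<^sub>R (a *\<^sub>R y) + (4 * F2 (?s p) * ((p - c) \<bullet> (a *\<^sub>R y))) *\<^sub>R (p - c)) \<bullet> (a *\<^sub>R y)
      = a^2 * s * (a + 4 * F2 s * s)"
    using radial_hess[of a y "F2 s"] by (simp add: a_def s_def y_def)
  have far: "a^2 * s * (a + 4 * F2 s * s) > 0" if "norm y > e"
  proof -
    have s2: "s > e^2" using that e by (simp add: s_def power2_norm_eq_inner[symmetric] power_strict_mono)
    have "a + 4 * F2 s * s = 2 * \<epsilon> * k * exp (- k * s) * (2 * k * s - 1)"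
      by (simp add: a_def F1_def F2_def algebra_simps power2_eq_square)
    moreover have "2 * k * s - 1 > 0" using s2 e by (simp add: k_def field_simps)
    ultimately have "a + 4 * F2 s * s > 0" using ep k by simp
    moreover have "s > 0" using s2 e by (smt (verit) zero_less_power)
    ultimately show ?thesis using a0 by simp
  qed
  have ng: "norm (a *\<^sub>R y) < \<Lambda> * u p" if "norm y \<le> e"
  proof -
    have pin: "p \<in> cball c e" using that by (simp add: y_def dist_norm norm_minus_commute)
    have up: "u p \<ge> \<mu>" using xm pin by (simp add: \<mu>_def)
    have "norm (a *\<^sub>R y) = 2 * \<epsilon> * k * exp (- k * s) * norm y"
      using ep k by (simp add: a_def F1_def abs_mult)
    also have "\<dots> \<le> 2 * \<epsilon> * k * 1 * e"
      using ep k that e by (intro mult_mono) (auto simp: s_def)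
    also have "\<dots> = \<Lambda> * \<mu> / 2" using k e by (simp add: \<epsilon>_def)
    also have "\<dots> < \<Lambda> * \<mu>" using L mu by simp
    also have "\<dots> \<le> \<Lambda> * u p" using L up by simp
    finally show ?thesis .
  qed
  show False
  proof (cases "p \<in> \<Omega>")
    case True
    have E: "E_op \<Lambda> (u p) (u p) (a *\<^sub>R y) (\<lambda>h. (2 * F1 (?s p)) *\<^sub>R h + (4 * F2 (?s p) * ((p - c) \<bullet> h)) *\<^sub>R (p - c)) \<ge> 0"
      using T True g by simp
    have up: "u p > 0" using pos True by blast
    show False
    proof (cases "norm y \<le> e")
      case True
      then show False using E ng up L unfolding E_op_def by (auto simp: abs_of_pos)
    next
      case False
      then show False using E far up Hgg unfolding E_op_def by auto
    qed
  next
    case False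
    then have fr: "p \<in> frontier \<Omega>" using p(1) closure_Un_frontier by blast
    have E: "max (E_op \<Lambda> (u p) (u p) (a *\<^sub>R y) (\<lambda>h. (2 * F1 (?s p)) *\<^sub>R h + (4 * F2 (?s p) * ((p - c) \<bullet> h)) *\<^sub>R (p - c))) ((a *\<^sub>R y) \<bullet> \<nu> p) \<ge> 0"
      using T fr g by simp
    have "norm y > e"
    proof (rule ccontr)
      assume "\<not> norm y > e"
      then have "p \<in> cball c e" by (simp add: y_def dist_norm norm_minus_commute)
      then show False using e False by blast
    qed
    then have H: "a^2 * s * (a + 4 * F2 s * s) > 0" by (rule far)
    have "y \<bullet> \<nu> p > 0" using normal_pos[OF op cv sb fr c] by (simp add: y_def)
    then have gn: "(a *\<^sub>R y) \<bullet> \<nu> p < 0" using a0 by (simp add: mult_neg_pos)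
    have "u p \<ge> 0" using nn p(1) by blast
    then show False using E H Hgg gn unfolding E_op_def by (auto split: if_splits)
  qed
qed

lemma F_derivs:
  assumes "\<eta> > 0"
  shows "t > -(\<eta>^2) \<Longrightarrow> ((\<lambda>t. a * sqrt (t + \<eta>^2) - b * t) has_real_derivative (a / (2 * sqrt (t + \<eta>^2)) - b)) (at t)"
    and "t > -(\<eta>^2) \<Longrightarrow> ((\<lambda>t. a / (2 * sqrt (t + \<eta>^2)) - b) has_real_derivative (- a / (4 * sqrt (t + \<eta>^2)^3))) (at t)"
    and "continuous_on {t. t > -(\<eta>^2)} (\<lambda>t. - a / (4 * sqrt (t + \<eta>^2)^3))"
proof -
  show "((\<lambda>t. a * sqrt (t + \<eta>^2) - b * t) has_real_derivative (a / (2 * sqrt (t + \<eta>^2)) - b)) (at t)" if "t > -(\<eta>^2)"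
    using that by (auto intro!: derivative_eq_intros simp: field_simps)
  show "((\<lambda>t. a / (2 * sqrt (t + \<eta>^2)) - b) has_real_derivative (- a / (4 * sqrt (t + \<eta>^2)^3))) (at t)" if "t > -(\<eta>^2)"
  proof -
    have w: "t + \<eta>^2 > 0" using that by simp
    then have sq: "sqrt (t + \<eta>^2) > 0" by simp
    show ?thesis
      using w sq by (auto intro!: derivative_eq_intros simp: field_simps power2_eq_square power3_eq_cube)
  qed
  show "continuous_on {t. t > -(\<eta>^2)} (\<lambda>t. - a / (4 * sqrt (t + \<eta>^2)^3))"
    by (intro continuous_intros) auto
qed

lemma cone_ineqs:
  fixes \<gamma> D \<delta> :: real
  assumes g: "\<gamma> > 0" and D: "D \<ge> 1" and d: "0 < \<delta>" "\<delta> \<le> D"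
  defines "\<tau> \<equiv> min 1 (\<gamma> / (4 * D))"
  defines "b \<equiv> \<tau> / (8 * D)" and "a \<equiv> 1 + \<tau>"
  defines "\<eta> \<equiv> min (\<gamma> / 8) (\<tau> * \<delta>^2 / (16 * D))"
  shows "\<eta> > 0"
    and "\<And>n. \<delta> \<le> n \<Longrightarrow> n \<le> D \<Longrightarrow> 2 * (a / (2 * sqrt (n^2 + \<eta>^2)) - b) * n > 1"
    and "\<And>n. \<delta> \<le> n \<Longrightarrow> n \<le> D \<Longrightarrow> (a / (2 * sqrt (n^2 + \<eta>^2)) - b) + 2 * (- a / (4 * sqrt (n^2 + \<eta>^2)^3)) * n^2 < 0"
    and "\<And>n. 0 \<le> n \<Longrightarrow> n \<le> D \<Longrightarrow> a * sqrt (n^2 + \<eta>^2) - b * n^2 \<ge> 0"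
    and "\<And>n. 0 \<le> n \<Longrightarrow> n \<le> D \<Longrightarrow> a * sqrt (n^2 + \<eta>^2) - b * n^2 \<le> n + \<gamma> / 2"
proof -
  have D0: "D > 0" using D by simp
  have t0: "\<tau> > 0" using g D0 by (simp add: \<tau>_def)
  have t1: "\<tau> \<le> 1" by (simp add: \<tau>_def)
  have tD: "\<tau> * D \<le> \<gamma> / 4" using D0 by (simp add: \<tau>_def min_def field_simps)
  have b0: "b > 0" using t0 D0 by (simp add: b_def)
  have bD: "b * D = \<tau> / 8" using D0 by (simp add: b_def)
  show e0: "\<eta> > 0" using g t0 d D0 by (simp add: \<eta>_def)
  have e1: "\<eta> \<le> \<gamma> / 8" by (simp add: \<eta>_def)
  have e2: "\<eta> \<le> \<tau> * \<delta>^2 / (16 * D)" by (simp add: \<eta>_def)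
  have dD: "\<delta> / D \<le> 1" using d D0 by simp
  have e3: "\<eta> \<le> \<tau> * \<delta> / 16"
  proof -
    have "\<tau> * \<delta>^2 / (16 * D) = (\<tau> * \<delta> / 16) * (\<delta> / D)" by (simp add: power2_eq_square)
    also have "\<dots> \<le> \<tau> * \<delta> / 16" by (rule mult_left_le[OF dD]) (use t0 d in simp)
    finally show ?thesis using e2 by simp
  qed
  have eq1: "\<eta>^2 \<le> \<tau> * \<delta>^2 / 16"
  proof -
    have "\<eta>^2 \<le> (\<tau> * \<delta> / 16)^2" using e0 e3 by (simp add: power_mono)
    also have "\<dots> = (\<tau> / 16) * (\<tau> * \<delta>^2 / 16)" by (simp add: power2_eq_square)
    also have "\<dots> \<le> \<tau> * \<delta>^2 / 16" using t0 t1 d by (simp add: mult_left_le_one_le)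
    finally show ?thesis .
  qed
  have eq2: "\<eta>^2 \<le> \<tau> * \<delta>^3 / (256 * D)"
  proof -
    have "\<eta>^2 \<le> (\<tau> * \<delta>^2 / (16 * D))^2" using e0 e2 by (simp add: power_mono)
    also have "\<dots> = (\<tau> * \<delta>^3 / (256 * D)) * (\<tau> * (\<delta> / D))"
      using D0 by (simp add: power2_eq_square power3_eq_cube field_simps)
    also have "\<dots> \<le> \<tau> * \<delta>^3 / (256 * D)"
      proof (rule mult_left_le)
      show "\<tau> * (\<delta> / D) \<le> 1" using mult_mono[OF t1 dD] t0 d D0 by (simp del: times_divide_eq_right)
    qed (use t0 d D0 in simp)
    finally show ?thesis .
  qed
  show "2 * (a / (2 * sqrt (n^2 + \<eta>^2)) - b) * n > 1" if n: "\<delta> \<le> n" "n \<le> D" for n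
  proof -
    define R where "R = sqrt (n^2 + \<eta>^2)"
    have n0: "n > 0" using n d by simp
    have R0: "R > 0" using n0 by (simp add: R_def add_pos_nonneg)
    have R2: "R^2 = n^2 + \<eta>^2" by (simp add: R_def)
    have nR: "n \<le> R" unfolding R_def by (rule real_le_rsqrt) simp
    have q1: "n / R \<le> 1" using nR R0 by simp
    have q0: "n / R \<ge> 0" using n0 R0 by simp
    have "n / R \<ge> (n / R)^2" using mult_left_le[OF q1 q0] by (simp only: power2_eq_square)
    moreover have "(n / R)^2 = 1 - \<eta>^2 / R^2"
    proof -
      have "(n / R)^2 = (R^2 - \<eta>^2) / R^2" using R2 by (simp add: power_divide)
      also have "\<dots> = 1 - \<eta>^2 / R^2" using R0 by (simp add: diff_divide_distrib)
      finally show ?thesis .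
    qed
    moreover have "\<eta>^2 / R^2 \<le> \<eta>^2 / \<delta>^2"
    proof (rule divide_left_mono)
      show "\<delta>^2 \<le> R^2" using R2 n d by (smt (verit) power_mono zero_le_power2)
    qed (use d R0 in auto)
    ultimately have nR1: "n / R \<ge> 1 - \<eta>^2 / \<delta>^2" by linarith
    have "\<eta>^2 / \<delta>^2 \<le> \<tau> / 16" using eq1 d by (simp add: divide_le_eq field_simps)
    then have "n / R \<ge> 1 - \<tau> / 16" using nR1 by linarith
    then have "a * (n / R) \<ge> (1 + \<tau>) * (1 - \<tau> / 16)" unfolding a_def using t0 by (intro mult_left_mono) auto
    moreover have "(1 + \<tau>) * (1 - \<tau> / 16) \<ge> 1 + \<tau> - \<tau> / 8"
    proof -
      have tt: "\<tau> * \<tau> \<le> \<tau>" using mult_left_le[OF t1 less_imp_le[OF t0]] .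
      have "(1 + \<tau>) * (1 - \<tau> / 16) = 1 + \<tau> - \<tau> / 16 - (\<tau> * \<tau>) / 16" by (simp add: field_simps)
      then show ?thesis using tt by linarith
    qed
    moreover have "2 * b * n \<le> \<tau> / 4" using mult_left_mono[OF n(2) less_imp_le[OF b0]] bD by linarith
    moreover have "2 * (a / (2 * R) - b) * n = a * (n / R) - 2 * b * n" using R0 by (simp add: field_simps)
    ultimately show ?thesis using t0 by (simp add: R_def)
  qed
  show "(a / (2 * sqrt (n^2 + \<eta>^2)) - b) + 2 * (- a / (4 * sqrt (n^2 + \<eta>^2)^3)) * n^2 < 0"
    if n: "\<delta> \<le> n" "n \<le> D" for n
  proof -
    define R where "R = sqrt (n^2 + \<eta>^2)"
    have n0: "n > 0" using n d by simp
    have R0: "R > 0" using n0 by (simp add: R_def add_pos_nonneg)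
    have R2: "R^2 = n^2 + \<eta>^2" by (simp add: R_def)
    have nR: "n \<le> R" unfolding R_def by (rule real_le_rsqrt) simp
    have "(a / (2 * R) - b) + 2 * (- a / (4 * R^3)) * n^2 = a * (R^2 - n^2) / (2 * R^3) - b"
      using R0 by (simp add: field_simps power2_eq_square power3_eq_cube)
    also have "\<dots> = a * \<eta>^2 / (2 * R^3) - b" using R2 by simp
    also have "\<dots> < 0"
    proof -
      have d3: "\<delta>^3 \<le> R^3" using d n nR by (intro power_mono) auto
      have "a * \<eta>^2 \<le> 2 * \<eta>^2" using t1 by (simp add: a_def mult_right_mono)
      also have "\<dots> \<le> 2 * (\<tau> * \<delta>^3 / (256 * D))" using eq2 by simp
      also have "\<dots> < 2 * b * \<delta>^3" using t0 D0 d by (simp add: b_def field_simps)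
      also have "\<dots> \<le> 2 * b * R^3" using b0 d3 by simp
      finally have "a * \<eta>^2 < b * (2 * R^3)" by simp
      then show ?thesis using R0 by (simp add: divide_less_eq)
    qed
    finally show ?thesis by (simp add: R_def)
  qed
  show "a * sqrt (n^2 + \<eta>^2) - b * n^2 \<ge> 0" if n: "0 \<le> n" "n \<le> D" for n
  proof -
    have nR: "n \<le> sqrt (n^2 + \<eta>^2)" by (rule real_le_rsqrt) simp
    have "b * n \<le> \<tau> / 8" using mult_left_mono[OF n(2) less_imp_le[OF b0]] bD by linarith
    then have "b * n \<le> a" using t0 by (simp add: a_def)
    then have "(b * n) * n \<le> a * n" using n by (intro mult_right_mono) auto
    then have "b * n^2 \<le> a * n" by (simp add: power2_eq_square mult.assoc)
    also have "\<dots> \<le> a * sqrt (n^2 + \<eta>^2)" using nR t0 by (simp add: a_def)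
    finally show ?thesis by simp
  qed
  show "a * sqrt (n^2 + \<eta>^2) - b * n^2 \<le> n + \<gamma> / 2" if n: "0 \<le> n" "n \<le> D" for n
  proof -
    have sR: "sqrt (n^2 + \<eta>^2) \<le> n + \<eta>"
      using n e0 by (intro real_le_lsqrt) (auto simp: power2_sum)
    have "a * sqrt (n^2 + \<eta>^2) \<le> a * (n + \<eta>)" using sR t0 by (simp add: a_def)
    also have "\<dots> = n + \<tau> * n + (1 + \<tau>) * \<eta>" by (simp add: a_def algebra_simps)
    also have "\<dots> \<le> n + \<tau> * D + 2 * \<eta>"
    proof -
      have "\<tau> * n \<le> \<tau> * D" using t0 n by simp
      moreover have "(1 + \<tau>) * \<eta> \<le> 2 * \<eta>" using t1 e0 by (simp add: mult_right_mono)
      ultimately show ?thesis by simp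
    qed
    also have "\<dots> \<le> n + \<gamma> / 2" using tD e1 by simp
    finally show ?thesis using b0 by (smt (verit) zero_le_power2 mult_nonneg_nonneg)
  qed
qed

lemma cone_bound:
  fixes \<Omega> :: "'a::euclidean_space set"
  assumes op: "open \<Omega>" and cv: "convex \<Omega>" and sb: "smooth_boundary_normal \<Omega> \<nu>" and L: "\<Lambda> > 0"
    and sub: "visc_sub \<Lambda> \<Omega> \<nu> u" and cu: "continuous_on (closure \<Omega>) u"
    and bd: "bounded \<Omega>" and le: "\<forall>x\<in>closure \<Omega>. u x \<le> 1 / \<Lambda>"
    and x1: "x1 \<in> closure \<Omega>" and x0: "x0 \<in> \<Omega>" and u0: "u x0 \<le> 0"
  shows "dist x1 x0 \<ge> u x1"
proof (rule ccontr)
  assume "\<not> dist x1 x0 \<ge> u x1"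
  define r1 where "r1 = norm (x1 - x0)"
  define \<gamma> where "\<gamma> = u x1 - r1"
  have g0: "\<gamma> > 0" using \<open>\<not> dist x1 x0 \<ge> u x1\<close> by (simp add: \<gamma>_def r1_def dist_norm)
  have bc: "bounded (closure \<Omega>)" using bd by (rule bounded_closure)
  obtain B where B: "\<forall>x\<in>closure \<Omega>. norm x \<le> B" using bc bounded_iff by blast
  define D where "D = max 1 (B + norm x0)"
  have D1: "D \<ge> 1" by (simp add: D_def)
  have nD: "norm (x - x0) \<le> D" if "x \<in> closure \<Omega>" for x
  proof -
    have "norm (x - x0) \<le> norm x + norm x0" by (rule norm_triangle_ineq4)
    also have "\<dots> \<le> B + norm x0" using B that by simp
    finally show ?thesis by (simp add: D_def)
  qed
  have x0c: "x0 \<in> closure \<Omega>" using x0 closure_subset by blast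
  obtain \<delta>0 where d0: "\<delta>0 > 0" "\<forall>y\<in>closure \<Omega>. dist y x0 < \<delta>0 \<longrightarrow> dist (u y) (u x0) < \<gamma> / 2"
    using cu x0c g0 unfolding continuous_on_iff by (meson half_gt_zero)
  define \<delta> where "\<delta> = min \<delta>0 D"
  have d: "\<delta> > 0" "\<delta> \<le> D" using d0 D1 by (auto simp: \<delta>_def)
  define \<tau> where "\<tau> = min 1 (\<gamma> / (4 * D))"
  define b where "b = \<tau> / (8 * D)"
  define a where "a = 1 + \<tau>"
  define \<eta> where "\<eta> = min (\<gamma> / 8) (\<tau> * \<delta>^2 / (16 * D))"
  note CI = cone_ineqs[OF g0 D1 d, folded \<tau>_def, folded a_def b_def \<eta>_def]
  have e0: "\<eta> > 0" by (rule CI(1))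
  define F1 where "F1 = (\<lambda>t. a / (2 * sqrt (t + \<eta>^2)) - b)"
  define F2 where "F2 = (\<lambda>t. - a / (4 * sqrt (t + \<eta>^2)^3))"
  let ?s = "\<lambda>x. (x - x0) \<bullet> (x - x0)"
  let ?\<phi> = "\<lambda>x. a * sqrt (?s x + \<eta>^2) - b * ?s x"
  have C: "C2_on UNIV ?\<phi> (\<lambda>x. (2 * F1 (?s x)) *\<^sub>R (x - x0))
     (\<lambda>x h. (2 * F1 (?s x)) *\<^sub>R h + (4 * F2 (?s x) * ((x - x0) \<bullet> h)) *\<^sub>R (x - x0))"
  proof (rule radial_C2[where ?T="{t. t > -(\<eta>^2)}" and ?F="\<lambda>t. a * sqrt (t + \<eta>^2) - b * t"])
    show "open {t::real. t > -(\<eta>^2)}" by (simp add: open_Collect_less)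
    show "continuous_on {t. t > -(\<eta>^2)} F2" unfolding F2_def by (rule F_derivs(3)[OF e0])
    show "(F1 has_real_derivative F2 t) (at t)" if "t \<in> {t. t > -(\<eta>^2)}" for t
      using F_derivs(2)[OF e0, of t a b] that unfolding F1_def F2_def by simp
    show "((\<lambda>t. a * sqrt (t + \<eta>^2) - b * t) has_real_derivative F1 t) (at t)" if "t \<in> {t. t > -(\<eta>^2)}" for t
      using F_derivs(1)[OF e0, of t a b] that unfolding F1_def by simp
    show "(x - x0) \<bullet> (x - x0) \<in> {t. t > -(\<eta>^2)}" for x
    proof -
      have "0 \<le> (x - x0) \<bullet> (x - x0)" by simp
      moreover have "-(\<eta>^2) < 0" using e0 by simp
      ultimately have "-(\<eta>^2) < (x - x0) \<bullet> (x - x0)" by linarith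
      then show ?thesis by simp
    qed
  qed auto
  have phin: "?\<phi> x = a * sqrt (norm (x - x0)^2 + \<eta>^2) - b * norm (x - x0)^2" for x
    by (simp add: power2_norm_eq_inner)
  have cc: "compact (closure \<Omega>)" using bd by (simp add: compact_closure)
  have cne: "closure \<Omega> \<noteq> {}" using x1 by (metis empty_iff)
  have cf: "continuous_on (closure \<Omega>) (\<lambda>x. u x - ?\<phi> x)"
    by (intro continuous_intros cu)
  obtain p where p: "p \<in> closure \<Omega>" "\<forall>x\<in>closure \<Omega>. u x - ?\<phi> x \<le> u p - ?\<phi> p"
    using continuous_attains_sup[OF cc cne cf] by blast
  note T = sub_test[OF sub op C p(1) p(2)]
  have "?\<phi> x1 \<le> r1 + \<gamma> / 2" using CI(5)[of r1] nD[OF x1] by (simp add: phin r1_def)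
  moreover have "u x1 - ?\<phi> x1 \<le> u p - ?\<phi> p" using p(2) x1 by blast
  ultimately have M: "u p - ?\<phi> p \<ge> \<gamma> / 2" using \<gamma>_def by linarith
  have "?\<phi> p \<ge> 0" using CI(4)[of "norm (p - x0)"] nD[OF p(1)] by (simp add: phin)
  then have up: "u p \<ge> \<gamma> / 2" using M by linarith
  define n where "n = norm (p - x0)"
  have nd: "n \<ge> \<delta>"
  proof (rule ccontr)
    assume "\<not> n \<ge> \<delta>"
    then have "dist p x0 < \<delta>0" using d0 by (simp add: n_def dist_norm \<delta>_def)
    then have "dist (u p) (u x0) < \<gamma> / 2" using d0(2) p(1) by blast
    then have "\<bar>u p - u x0\<bar> < \<gamma> / 2" by (simp add: dist_real_def)
    then have "u p - u x0 < \<gamma> / 2" by (metis abs_less_iff)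
    then show False using up u0 by linarith
  qed
  have nD': "n \<le> D" using nD[OF p(1)] by (simp add: n_def)
  define y where "y = p - x0"
  define s where "s = y \<bullet> y"
  have sn: "s = n^2" by (simp add: s_def n_def y_def power2_norm_eq_inner)
  define A where "A = 2 * F1 s"
  have c1: "A * n > 1" using CI(2)[OF nd nD'] by (simp add: A_def F1_def sn)
  have n0: "n > 0" using nd d by simp
  have A0: "A > 0" using c1 n0 by (smt (verit) mult_nonpos_nonneg)
  have c2: "A + 4 * F2 s * s < 0"
  proof -
    have "F1 s + 2 * F2 s * s < 0" using CI(3)[OF nd nD'] by (simp add: F1_def F2_def sn)
    then show ?thesis by (simp add: A_def)
  qed
  have g: "(2 * F1 (?s p)) *\<^sub>R (p - x0) = A *\<^sub>R y" by (simp add: A_def s_def y_def)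
  have Hgg: "((2 * F1 (?s p)) *\<^sub>R (A *\<^sub>R y) + (4 * F2 (?s p) * ((p - x0) \<bullet> (A *\<^sub>R y))) *\<^sub>R (p - x0)) \<bullet> (A *\<^sub>R y)
      = A^2 * s * (A + 4 * F2 s * s)"
    using radial_hess[of A y "F2 s"] by (simp add: A_def s_def y_def)
  have s0: "s > 0" using n0 sn by simp
  have Hneg: "A^2 * s * (A + 4 * F2 s * s) < 0" using A0 s0 c2 by (simp add: mult_pos_neg)
  have ng: "norm (A *\<^sub>R y) > \<Lambda> * u p"
  proof -
    have "\<Lambda> * u p \<le> 1" using le p(1) L by (simp add: field_simps)
    moreover have "norm (A *\<^sub>R y) = A * n" using A0 by (simp add: n_def y_def)
    ultimately show ?thesis using c1 by linarith
  qed
  have upos: "u p > 0" using up g0 by linarith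
  show False
  proof (cases "p \<in> \<Omega>")
    case True
    have E: "E_op \<Lambda> (u p) (u p) (A *\<^sub>R y) (\<lambda>h. (2 * F1 (?s p)) *\<^sub>R h + (4 * F2 (?s p) * ((p - x0) \<bullet> h)) *\<^sub>R (p - x0)) \<le> 0"
      using T True g by simp
    then show False using ng upos Hgg Hneg unfolding E_op_def by (auto simp: abs_of_pos)
  next
    case False
    then have fr: "p \<in> frontier \<Omega>" using p(1) closure_Un_frontier by blast
    have E: "min (E_op \<Lambda> (u p) (u p) (A *\<^sub>R y) (\<lambda>h. (2 * F1 (?s p)) *\<^sub>R h + (4 * F2 (?s p) * ((p - x0) \<bullet> h)) *\<^sub>R (p - x0))) ((A *\<^sub>R y) \<bullet> \<nu> p) \<le> 0"
      using T fr g by simp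
    have "y \<bullet> \<nu> p > 0" using normal_pos[OF op cv sb fr x0] by (simp add: y_def)
    then have gn: "(A *\<^sub>R y) \<bullet> \<nu> p > 0" using A0 by simp
    show False using E gn ng upos Hgg Hneg unfolding E_op_def by (auto simp: abs_of_pos)
  qed
qed

theorem mainTheorem11:
  fixes \<Omega> :: "'a::euclidean_space set" and \<nu> :: "'a \<Rightarrow> 'a" and u :: "'a \<Rightarrow> real" and \<Lambda> :: real
  assumes "open \<Omega>" and "bounded \<Omega>" and "convex \<Omega>"
    and "smooth_boundary_normal \<Omega> \<nu>"
    and "\<Lambda> > 0"
    and "visc_solution \<Lambda> \<Omega> \<nu> u"
    and "\<not> (\<exists>c. \<forall>x\<in>closure \<Omega>. u x = c)"
    and "\<exists>x\<in>closure \<Omega>. u x = 1 / \<Lambda>" and "\<forall>x\<in>closure \<Omega>. u x \<le> 1 / \<Lambda>"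
  shows "(\<forall>x\<in>closure \<Omega>. \<forall>x0\<in>\<Omega>. u x \<ge> 0 \<longrightarrow> u x0 \<le> 0 \<longrightarrow> dist x x0 \<ge> u x)
       \<and> (SUP x\<in>closure {y\<in>\<Omega>. u y > 0}. infdist x {y\<in>\<Omega>. u y = 0}) \<ge> 1 / \<Lambda>"
proof -
  note op = assms(1) and bd = assms(2) and cv = assms(3) and sb = assms(4) and L = assms(5)
  have cu: "continuous_on (closure \<Omega>) u" and sub: "visc_sub \<Lambda> \<Omega> \<nu> u" and sup: "visc_super \<Lambda> \<Omega> \<nu> u"
    using assms(6) unfolding visc_solution_def by auto
  have P1: "\<forall>x\<in>closure \<Omega>. \<forall>x0\<in>\<Omega>. u x \<ge> 0 \<longrightarrow> u x0 \<le> 0 \<longrightarrow> dist x x0 \<ge> u x"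
    using cone_bound[OF op cv sb L sub cu bd assms(9)] by blast
  obtain xb where xb: "xb \<in> closure \<Omega>" "u xb = 1 / \<Lambda>" using assms(8) by blast
  have ne: "\<Omega> \<noteq> {}" using xb(1) by auto
  have xbc: "xb \<in> closure {y\<in>\<Omega>. u y > 0}"
    unfolding closure_approachable
  proof (intro allI impI)
    fix e :: real assume e: "e > 0"
    obtain d where d: "d > 0" "\<forall>y\<in>closure \<Omega>. dist y xb < d \<longrightarrow> dist (u y) (u xb) < 1 / \<Lambda>"
    proof -
      have "1 / \<Lambda> > 0" using L by simp
      then show ?thesis using that cu xb(1) unfolding continuous_on_iff by blast
    qed
    obtain y where y: "y \<in> \<Omega>" "dist y xb < min e d"
    proof -
      have "min e d > 0" using e d(1) by simp
      then show ?thesis using that xb(1) unfolding closure_approachable by blast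
    qed
    have "dist (u y) (u xb) < 1 / \<Lambda>" using d(2) y closure_subset by force
    then have "u y > 0" using xb(2) by (auto simp: dist_real_def abs_less_iff)
    then show "\<exists>y\<in>{y\<in>\<Omega>. u y > 0}. dist y xb < e" using y by auto
  qed
  have Zne: "{y\<in>\<Omega>. u y = 0} \<noteq> {}"
  proof
    assume Z: "{y\<in>\<Omega>. u y = 0} = {}"
    obtain yp where yp: "yp \<in> \<Omega>" "u yp > 0"
    proof -
      have "\<exists>y\<in>{y\<in>\<Omega>. u y > 0}. dist y xb < 1" using xbc unfolding closure_approachable by simp
      then show ?thesis using that by blast
    qed
    have pos: "\<forall>x\<in>\<Omega>. u x > 0"
    proof (rule ccontr)
      assume "\<not> (\<forall>x\<in>\<Omega>. u x > 0)"
      then obtain yn where yn: "yn \<in> \<Omega>" "u yn \<le> 0" by auto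
      have conn: "connected (u ` \<Omega>)"
        using connected_continuous_image[OF continuous_on_subset[OF cu closure_subset] convex_connected[OF cv]] .
      have "0 \<in> u ` \<Omega>"
        using connectedD_interval[OF conn, of "u yn" "u yp" 0] yn yp by auto
      then show False using Z by auto
    qed
    have nn: "\<forall>x\<in>closure \<Omega>. u x \<ge> 0"
      using continuous_ge_on_closure[OF cu] pos by (metis less_imp_le)
    show False using pos_impossible[OF op cv sb L sup cu bd ne pos nn] .
  qed
  have inf: "infdist xb {y\<in>\<Omega>. u y = 0} \<ge> 1 / \<Lambda>"
    unfolding infdist_notempty[OF Zne]
  proof (rule cINF_greatest[OF Zne])
    fix z assume "z \<in> {y\<in>\<Omega>. u y = 0}"
    then show "1 / \<Lambda> \<le> dist xb z" using P1 xb L by auto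
  qed
  obtain B where B: "\<forall>x\<in>closure \<Omega>. norm x \<le> B" using bounded_closure[OF bd] bounded_iff by blast
  obtain z0 where z0: "z0 \<in> {y\<in>\<Omega>. u y = 0}" using Zne by blast
  have bdd: "bdd_above ((\<lambda>x. infdist x {y\<in>\<Omega>. u y = 0}) ` closure {y\<in>\<Omega>. u y > 0})"
  proof (rule bdd_aboveI2)
    fix x assume x: "x \<in> closure {y\<in>\<Omega>. u y > 0}"
    have "closure {y\<in>\<Omega>. u y > 0} \<subseteq> closure \<Omega>" by (rule closure_mono) auto
    then have "norm x \<le> B" using x B by blast
    have "infdist x {y\<in>\<Omega>. u y = 0} \<le> dist x z0" by (rule infdist_le[OF z0])
    also have "\<dots> \<le> norm x + norm z0" by (simp add: dist_norm norm_triangle_ineq4)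
    finally show "infdist x {y\<in>\<Omega>. u y = 0} \<le> B + norm z0" using \<open>norm x \<le> B\<close> by linarith
  qed
  have "(SUP x\<in>closure {y\<in>\<Omega>. u y > 0}. infdist x {y\<in>\<Omega>. u y = 0}) \<ge> 1 / \<Lambda>"
    by (rule cSUP_upper2[OF bdd xbc inf])
  with P1 show ?thesis by blast
qed

end
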